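(* Let $N\ge2$, $x_1>\cdots>x_N$ real, and $\mathbf A\in\{-1,1\}^{N\times N}$ with $\mathbf A_{i,n}=\mathrm{sign}(x_i-x_n)$. Then $\mathbf A$ is invertible and $$\mathbf A^{-1}=\frac12\begin{pmatrix}\Delta & -\mathbf e\\ \mathbf e_1^T & 1\end{pmatrix},$$ where $\mathbf e=(0,\dots,0,1)^T\in\mathbb R^{N-1}$ and $\mathbf e_1=(1,0,\dots,0)^T\in\mathbb R^{N-1}$.
   Context: $\mathrm{sign}(x)=1$ if $x\ge0$ and $-1$ if $x<0$. $\Delta\in\mathbb R^{(N-1)\times(N-1)}$ is the finite difference matrix with $\Delta_{i,i}=1$, $\Delta_{i,i+1}=-1$, and all other entries $0$. *)

theory Defs
  imports "Jordan_Normal_Form.Matrix"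
begin

definition sign :: "real \<Rightarrow> real" where
  "sign x = (if x \<ge> 0 then 1 else -1)"

definition fin_diff :: "nat \<Rightarrow> real mat" where
  "fin_diff m = mat m m (\<lambda>(i, j). if j = i then 1 else if j = i + 1 then -1 else 0)"

definition e_last_col :: "nat \<Rightarrow> real mat" where
  "e_last_col m = mat m 1 (\<lambda>(i, _). if i = m - 1 then 1 else 0)"

definition e_first_row :: "nat \<Rightarrow> real mat" where
  "e_first_row m = mat 1 m (\<lambda>(_, j). if j = 0 then 1 else 0)"

definition sign_mat :: "nat \<Rightarrow> (nat \<Rightarrow> real) \<Rightarrow> real mat" where
  "sign_mat N x = mat N N (\<lambda>(i, n). sign (x i - x n))"

end

theory Submission
  imports Defs
begin

theorem lemma21:
  fixes N :: nat and x :: "nat \<Rightarrow> real"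
  assumes "N \<ge> 2"
    and "\<And>i j. i < j \<Longrightarrow> j < N \<Longrightarrow> x i > x j"
  shows "invertible_mat (sign_mat N x) \<and>
    (let B = (1/2) \<cdot>\<^sub>m four_block_mat (fin_diff (N - 1)) (- e_last_col (N - 1))
                  (e_first_row (N - 1)) (1\<^sub>m 1)
     in sign_mat N x * B = 1\<^sub>m N \<and> B * sign_mat N x = 1\<^sub>m N)"
proof -
  define M where "M = N - 1"
  have NM: "N = Suc M" and M1: "M \<ge> 1" using assms(1) unfolding M_def by auto
  define A where "A = sign_mat N x"
  define B where "B = (1/2) \<cdot>\<^sub>m four_block_mat (fin_diff (N - 1)) (- e_last_col (N - 1))
                  (e_first_row (N - 1)) (1\<^sub>m 1)"
  have dA: "dim_row A = N" "dim_col A = N" unfolding A_def sign_mat_def by auto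
  have dB: "dim_row B = N" "dim_col B = N" unfolding B_def fin_diff_def e_last_col_def e_first_row_def
    using NM by auto
  have Aij: "A $$ (i,n) = (if i \<le> n then 1 else -1)" if "i < N" "n < N" for i n
  proof -
    have "i \<le> n \<Longrightarrow> x i \<ge> x n" using assms(2)[of i n] that by (cases "i = n") auto
    moreover have "\<not> i \<le> n \<Longrightarrow> x i < x n" using assms(2)[of n i] that by auto
    ultimately show ?thesis using that unfolding A_def sign_mat_def sign_def
      by (cases "i \<le> n") auto
  qed
  have Bij: "B $$ (i,j) = (1/2) * (if i < M then (if j = i then 1 else if j = i + 1 then -1 else 0)
       else (if j = 0 \<or> j = M then 1 else 0))" if "i < N" "j < N" for i j
    using that M1 unfolding B_def M_def[symmetric] NM
    by (auto simp: fin_diff_def e_last_col_def e_first_row_def four_block_mat_def)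
  have Brow: "B $$ (i,k) = (1/2) * (if i < M then (if k = i then 1 else 0) - (if k = i + 1 then 1 else 0)
       else (if k = 0 then 1 else 0) + (if k = M then 1 else 0))" if "i < N" "k < N" for i k
    using Bij[OF that] M1 by auto
  have Bcol: "B $$ (k,j) = (1/2) * (if j = 0 then (if k = 0 then 1 else 0) + (if k = M then 1 else 0)
       else (if k = j then 1 else 0) - (if k + 1 = j then 1 else 0))" if "k < N" "j < N" for k j
    using Bij[OF that] M1 that NM by auto
  have BA: "B * A = 1\<^sub>m N"
  proof (rule eq_matI)
    fix i n assume i: "i < dim_row (1\<^sub>m N)" and n: "n < dim_col (1\<^sub>m N)"
    then have i: "i < N" and n: "n < N" by auto
    have "(B * A) $$ (i,n) = (\<Sum>k<N. B $$ (i,k) * A $$ (k,n))"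
      using i n dA dB by (simp add: scalar_prod_def lessThan_atLeast0)
    also have "\<dots> = (\<Sum>k<N. (1/2) * (if i < M then (if k = i then A $$ (i,n) else 0) - (if k = i + 1 then A $$ (i+1,n) else 0)
       else (if k = 0 then A $$ (0,n) else 0) + (if k = M then A $$ (M,n) else 0)))"
      by (rule sum.cong) (auto simp: Brow i)
    also have "\<dots> = (1/2) * (if i < M then A $$ (i,n) - A $$ (i+1,n) else A $$ (0,n) + A $$ (M,n))"
    proof (cases "i < M")
      case True
      then have "i + 1 < N" using NM by simp
      then show ?thesis using True i
        unfolding sum_distrib_left[symmetric] by (simp add: sum_subtractf)
    next
      case False
      then show ?thesis using NM
        unfolding sum_distrib_left[symmetric] by (simp add: sum.distrib)
    qed
    also have "\<dots> = (if i = n then 1 else 0)"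
      using i n NM by (auto simp: Aij)
    finally show "(B * A) $$ (i,n) = 1\<^sub>m N $$ (i,n)" using i n by simp
  qed (auto simp: dA dB)
  have AB: "A * B = 1\<^sub>m N"
  proof (rule eq_matI)
    fix i n assume i: "i < dim_row (1\<^sub>m N)" and n: "n < dim_col (1\<^sub>m N)"
    then have i: "i < N" and n: "n < N" by auto
    have "(A * B) $$ (i,n) = (\<Sum>k<N. A $$ (i,k) * B $$ (k,n))"
      using i n dA dB by (simp add: scalar_prod_def lessThan_atLeast0)
    also have "\<dots> = (\<Sum>k<N. (1/2) * (if n = 0 then (if k = 0 then A $$ (i,0) else 0) + (if k = M then A $$ (i,M) else 0)
       else (if k = n then A $$ (i,n) else 0) - (if k = n - 1 then A $$ (i,n-1) else 0)))"
      by (rule sum.cong) (auto simp: Bcol n)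
    also have "\<dots> = (1/2) * (if n = 0 then A $$ (i,0) + A $$ (i,M) else A $$ (i,n) - A $$ (i,n-1))"
    proof (cases "n = 0")
      case True
      have "M < N" "0 < N" using NM by auto
      then show ?thesis using True
        unfolding sum_distrib_left[symmetric] by (simp add: sum.distrib)
    next
      case False
      then have "n - 1 < N" using n by simp
      then show ?thesis using False n
        unfolding sum_distrib_left[symmetric] by (simp add: sum_subtractf)
    qed
    also have "\<dots> = (if i = n then 1 else 0)"
      using i n NM by (auto simp: Aij)
    finally show "(A * B) $$ (i,n) = 1\<^sub>m N $$ (i,n)" using i n by simp
  qed (auto simp: dA dB)
  have "invertible_mat A"
    unfolding invertible_mat_def inverts_mat_def square_mat.simps
    using AB BA dA dB by metis
  then show ?thesis using AB BA unfolding A_def B_def Let_def by simp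
qed

end
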